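(* In the testing setting described in the context, let $\hat\rho^e$ be obtained as in Lemma 3 (with parameters $\delta_0\in(0,1]$, $\epsilon_0>0$) and $e^e$ as in Lemma 4 (with parameters $\delta_1\in(0,1]$, $\epsilon_1>0$), the two optimization runs using independent samples, and assume the hypotheses of both lemmas hold. Define $\rho^e=\hat\rho^e-e^e$ and $\epsilon=2e^e+\epsilon_0+\epsilon_1$. Then $$\mathbb{P}\big[\rho^*\ge\rho^e\big]\ge(1-\delta_0)(1-\delta_1),\qquad\mathbb{P}\big[|\rho^*-\rho^e|\le\epsilon\big]\ge(1-\delta_0)(1-\delta_1),$$ where $\rho^*=\min_{d\in\mathcal{D}}\mathbb{E}_{\Pi(d)}[\rho(\phi(d))]$.
   Context: Testing setting: $\mathcal{D}\subset\mathbb{R}^l$ is a compact convex set of test parameters. For each $d\in\mathcal{D}$, the true system produces a random state-trajectory signal $\phi(d)$ with distribution $\Pi(d)$, and a simulator produces a random signal $\hat\phi(d)$ with distribution $\hat\Pi(d)$, independent of $\phi(d)$. A robustness measure $\rho$ maps signals to bounded real values. Define $\hat\rho^*=\min_{d\in\mathcal{D}}\mathbb{E}_{\hat\Pi(d)}[\rho(\hat\phi(d))]$ and $e^*=\max_{d\in\mathcal{D}}\mathbb{E}_{\Pi(d),\hat\Pi(d)}[|\rho(\phi(d))-\rho(\hat\phi(d))|]$. Lemma 3: under RKHS-norm bound $B$, $R$-sub-Gaussian sampling noise and a kernel with sublinear information gain for $d\mapsto-\mathbb{E}[\rho(\hat\phi(d))]$, the Modified GP-UCB algorithm (a GP-UCB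 procedure that stops when $2\beta_i\sigma_{i-1}(z_i)\le\epsilon$ and outputs $J^e=\mu_{i-1}(z_i)+\beta_i\sigma_{i-1}(z_i)$) produces $\hat\rho^e=-J^e$ with $\mathbb{P}[\hat\rho^*\ge\hat\rho^e]\ge1-\delta_0$ and $\mathbb{P}[|\hat\rho^*-\hat\rho^e|\le\epsilon_0]\ge1-\delta_0$. Lemma 4: under the analogous hypotheses for $d\mapsto\mathbb{E}[|\rho(\phi(d))-\rho(\hat\phi(d))|]$, the same algorithm produces $e^e=J^e$ with $\mathbb{P}[e^*\le e^e]\ge1-\delta_1$ and $\mathbb{P}[|e^*-e^e|\le\epsilon_1]\ge1-\delta_1$. *)

theory Defs
  imports "HOL-Probability.Probability"
begin

text \<open>Optimal expected simulated robustness: rho_hat_star = min over d in D of E_{PiHat(d)}[rho].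
  Written with INF, which coincides with the minimum whenever the latter exists.\<close>
definition rho_hat_star :: "'d set \<Rightarrow> ('d \<Rightarrow> 's measure) \<Rightarrow> ('s \<Rightarrow> real) \<Rightarrow> real" where
  "rho_hat_star D PH rho = (INF d\<in>D. integral\<^sup>L (PH d) rho)"

definition rho_star :: "'d set \<Rightarrow> ('d \<Rightarrow> 's measure) \<Rightarrow> ('s \<Rightarrow> real) \<Rightarrow> real" where
  "rho_star D P rho = (INF d\<in>D. integral\<^sup>L (P d) rho)"

text \<open>Maximal expected sim-to-real robustness gap; phi(d) and phiHat(d) are independent,
  so their joint law is the product measure.\<close>
definition e_star :: "'d set \<Rightarrow> ('d \<Rightarrow> 's measure) \<Rightarrow> ('d \<Rightarrow> 's measure) \<Rightarrow> ('s \<Rightarrow> real) \<Rightarrow> real" where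
  "e_star D P PH rho =
     (SUP d\<in>D. integral\<^sup>L (P d \<Otimes>\<^sub>M PH d) (\<lambda>(x, y). \<bar>rho x - rho y\<bar>))"

end

theory Submission imports Defs begin

lemma gap_bounds:
  fixes f :: "'s \<Rightarrow> real"
  assumes A: "prob_space A" and B: "prob_space B" and sA: "sets A = sets S" and sB: "sets B = sets S"
    and f: "f \<in> borel_measurable S" and C: "\<forall>x\<in>space S. \<bar>f x\<bar> \<le> C"
  shows "\<bar>integral\<^sup>L A f - integral\<^sup>L B f\<bar> \<le> integral\<^sup>L (A \<Otimes>\<^sub>M B) (\<lambda>(x,y). \<bar>f x - f y\<bar>)"
    and "integral\<^sup>L (A \<Otimes>\<^sub>M B) (\<lambda>(x,y). \<bar>f x - f y\<bar>) \<le> 2 * C"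
    and "0 \<le> integral\<^sup>L (A \<Otimes>\<^sub>M B) (\<lambda>(x,y). \<bar>f x - f y\<bar>)"
    and "\<bar>integral\<^sup>L A f\<bar> \<le> C" and "\<bar>integral\<^sup>L B f\<bar> \<le> C"
proof -
  interpret A: prob_space A by fact
  interpret B: prob_space B by fact
  interpret AB: pair_prob_space A B by unfold_locales
  have spA: "space A = space S" using sA by (rule sets_eq_imp_space_eq)
  have spB: "space B = space S" using sB by (rule sets_eq_imp_space_eq)
  have fA[measurable]: "f \<in> borel_measurable A" using f measurable_cong_sets[OF sA refl, of borel] by metis
  have fB[measurable]: "f \<in> borel_measurable B" using f measurable_cong_sets[OF sB refl, of borel] by metis
  have iA: "integrable A f" by (rule A.integrable_const_bound[where B=C]) (use C spA in auto)
  have iB: "integrable B f" by (rule B.integrable_const_bound[where B=C]) (use C spB in auto)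
  have gm: "(\<lambda>(x,y). \<bar>f x - f y\<bar>) \<in> borel_measurable (A \<Otimes>\<^sub>M B)" by measurable
  have gb: "\<forall>z\<in>space (A \<Otimes>\<^sub>M B). \<bar>(\<lambda>(x,y). \<bar>f x - f y\<bar>) z\<bar> \<le> 2*C"
  proof
    fix z assume "z \<in> space (A \<Otimes>\<^sub>M B)"
    then obtain x y where z: "z = (x,y)" "x \<in> space S" "y \<in> space S"
      using spA spB by (auto simp: space_pair_measure)
    have "\<bar>f x\<bar> \<le> C" "\<bar>f y\<bar> \<le> C" using C z by auto
    then show "\<bar>(\<lambda>(x,y). \<bar>f x - f y\<bar>) z\<bar> \<le> 2*C" using z by auto
  qed
  have ig: "integrable (A \<Otimes>\<^sub>M B) (\<lambda>(x,y). \<bar>f x - f y\<bar>)"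
    by (rule AB.P.integrable_const_bound[where B="2*C"]) (use gb gm in auto)
  show "integral\<^sup>L (A \<Otimes>\<^sub>M B) (\<lambda>(x,y). \<bar>f x - f y\<bar>) \<le> 2 * C"
  proof -
    have "integral\<^sup>L (A \<Otimes>\<^sub>M B) (\<lambda>(x,y). \<bar>f x - f y\<bar>) \<le> integral\<^sup>L (A \<Otimes>\<^sub>M B) (\<lambda>_. 2*C)"
      by (rule integral_mono[OF ig]) (use gb in auto)
    then show ?thesis by (simp add: AB.P.prob_space)
  qed
  show "0 \<le> integral\<^sup>L (A \<Otimes>\<^sub>M B) (\<lambda>(x,y). \<bar>f x - f y\<bar>)"
    by (rule Bochner_Integration.integral_nonneg) (auto split: prod.split)
  show "\<bar>integral\<^sup>L A f\<bar> \<le> C"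
  proof -
    have "\<bar>integral\<^sup>L A f\<bar> \<le> integral\<^sup>L A (\<lambda>x. \<bar>f x\<bar>)"
      using integral_abs_bound by blast
    also have "\<dots> \<le> integral\<^sup>L A (\<lambda>_. C)"
      by (rule integral_mono) (use iA C spA in auto)
    finally show ?thesis by (simp add: A.prob_space)
  qed
  show "\<bar>integral\<^sup>L B f\<bar> \<le> C"
  proof -
    have "\<bar>integral\<^sup>L B f\<bar> \<le> integral\<^sup>L B (\<lambda>x. \<bar>f x\<bar>)"
      using integral_abs_bound by blast
    also have "\<dots> \<le> integral\<^sup>L B (\<lambda>_. C)"
      by (rule integral_mono) (use iB C spB in auto)
    finally show ?thesis by (simp add: B.prob_space)
  qed
  define c where "c = integral\<^sup>L B f"
  have inner: "\<bar>f x - c\<bar> \<le> integral\<^sup>L B (\<lambda>y. \<bar>f x - f y\<bar>)" if "x \<in> space A" for x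
  proof -
    have "integral\<^sup>L B (\<lambda>y. f x - f y) = f x - c"
      using iB by (simp add: c_def B.prob_space)
    then have "\<bar>f x - c\<bar> = \<bar>integral\<^sup>L B (\<lambda>y. f x - f y)\<bar>" by simp
    also have "\<dots> \<le> integral\<^sup>L B (\<lambda>y. \<bar>f x - f y\<bar>)" using integral_abs_bound by blast
    finally show ?thesis .
  qed
  have ic: "integrable A (\<lambda>x. \<bar>f x - c\<bar>)" using iA by auto
  have "\<bar>integral\<^sup>L A f - c\<bar> = \<bar>integral\<^sup>L A (\<lambda>x. f x - c)\<bar>"
    using iA by (simp add: A.prob_space)
  also have "\<dots> \<le> integral\<^sup>L A (\<lambda>x. \<bar>f x - c\<bar>)" using integral_abs_bound by blast
  also have "\<dots> \<le> integral\<^sup>L A (\<lambda>x. integral\<^sup>L B (\<lambda>y. \<bar>f x - f y\<bar>))"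
    by (rule integral_mono[OF ic]) (use AB.integrable_fst[of "\<lambda>x y. \<bar>f x - f y\<bar>"] ig inner in auto)
  also have "\<dots> = integral\<^sup>L (A \<Otimes>\<^sub>M B) (\<lambda>(x,y). \<bar>f x - f y\<bar>)"
    using AB.integral_fst[of "\<lambda>x y. \<bar>f x - f y\<bar>"] ig by simp
  finally show "\<bar>integral\<^sup>L A f - integral\<^sup>L B f\<bar> \<le> integral\<^sup>L (A \<Otimes>\<^sub>M B) (\<lambda>(x,y). \<bar>f x - f y\<bar>)"
    by (simp add: c_def)
qed

theorem theorem2:
  fixes D :: "(real ^ 'l) set"
    and S :: "'s measure"
    and P PH :: "real ^ 'l \<Rightarrow> 's measure"
    and rho :: "'s \<Rightarrow> real"
    and M :: "'w measure"
    and rho_hat_e e_e :: "'w \<Rightarrow> real"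
    and \<delta>0 \<delta>1 \<epsilon>0 \<epsilon>1 :: real
  assumes D: "compact D" "convex D" "D \<noteq> {}"
    and P: "\<And>d. d \<in> D \<Longrightarrow> prob_space (P d) \<and> sets (P d) = sets S"
    and PH: "\<And>d. d \<in> D \<Longrightarrow> prob_space (PH d) \<and> sets (PH d) = sets S"
    and rho_meas: "rho \<in> borel_measurable S"
    and rho_bdd: "\<exists>B. \<forall>x\<in>space S. \<bar>rho x\<bar> \<le> B"
    and M: "prob_space M"
    and rv: "rho_hat_e \<in> borel_measurable M" "e_e \<in> borel_measurable M"
    and indep: "prob_space.indep_var M borel rho_hat_e borel e_e"
    and \<delta>0: "0 < \<delta>0" "\<delta>0 \<le> 1" and \<epsilon>0: "0 < \<epsilon>0"
    and \<delta>1: "0 < \<delta>1" "\<delta>1 \<le> 1" and \<epsilon>1: "0 < \<epsilon>1"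
    and lemma3_a: "measure M {w \<in> space M. rho_hat_star D PH rho \<ge> rho_hat_e w} \<ge> 1 - \<delta>0"
    and lemma3_b: "measure M {w \<in> space M. \<bar>rho_hat_star D PH rho - rho_hat_e w\<bar> \<le> \<epsilon>0} \<ge> 1 - \<delta>0"
    and lemma4_a: "measure M {w \<in> space M. e_star D P PH rho \<le> e_e w} \<ge> 1 - \<delta>1"
    and lemma4_b: "measure M {w \<in> space M. \<bar>e_star D P PH rho - e_e w\<bar> \<le> \<epsilon>1} \<ge> 1 - \<delta>1"
  shows "(measure M {w \<in> space M. rho_star D P rho \<ge> rho_hat_e w - e_e w}
           \<ge> (1 - \<delta>0) * (1 - \<delta>1)
       \<and> measure M {w \<in> space M.
           \<bar>rho_star D P rho - (rho_hat_e w - e_e w)\<bar> \<le> 2 * e_e w + \<epsilon>0 + \<epsilon>1}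
           \<ge> (1 - \<delta>0) * (1 - \<delta>1))"
proof -
  obtain C where C: "\<forall>x\<in>space S. \<bar>rho x\<bar> \<le> C" using rho_bdd by blast
  define a where "a d = integral\<^sup>L (P d) rho" for d
  define b where "b d = integral\<^sup>L (PH d) rho" for d
  define g where "g d = integral\<^sup>L (P d \<Otimes>\<^sub>M PH d) (\<lambda>(x, y). \<bar>rho x - rho y\<bar>)" for d
  have G: "\<bar>a d - b d\<bar> \<le> g d" "g d \<le> 2*C" "0 \<le> g d" "\<bar>a d\<bar> \<le> C" "\<bar>b d\<bar> \<le> C"
    if "d \<in> D" for d
    using gap_bounds[of "P d" "PH d" S rho C] P[OF that] PH[OF that] rho_meas C
    unfolding a_def b_def g_def by auto
  have rs: "rho_star D P rho = (INF d\<in>D. a d)" unfolding rho_star_def a_def ..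
  have rhs: "rho_hat_star D PH rho = (INF d\<in>D. b d)" unfolding rho_hat_star_def b_def ..
  have es: "e_star D P PH rho = (SUP d\<in>D. g d)" unfolding e_star_def g_def ..
  have bba: "bdd_below (a ` D)" using G(4) by (intro bdd_belowI[where m="-C"]) force
  have bbb: "bdd_below (b ` D)" using G(5) by (intro bdd_belowI[where m="-C"]) force
  have bag: "bdd_above (g ` D)" using G(2) by (intro bdd_aboveI[where M="2*C"]) force
  have ge: "g d \<le> e_star D P PH rho" if "d \<in> D" for d
    unfolding es by (rule cSUP_upper[OF that bag])
  obtain d0 where d0: "d0 \<in> D" using D(3) by blast
  have e0: "0 \<le> e_star D P PH rho" using G(3)[OF d0] ge[OF d0] by linarith
  have ineq1: "rho_hat_star D PH rho - e_star D P PH rho \<le> rho_star D P rho"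
  proof -
    have "rho_hat_star D PH rho - e_star D P PH rho \<le> a d" if "d \<in> D" for d
    proof -
      have "rho_hat_star D PH rho \<le> b d" unfolding rhs by (rule cINF_lower[OF bbb that])
      then show ?thesis using G(1)[OF that] ge[OF that] by linarith
    qed
    then show ?thesis unfolding rs by (intro cINF_greatest[OF D(3)]) auto
  qed
  have ineq2: "rho_star D P rho - e_star D P PH rho \<le> rho_hat_star D PH rho"
  proof -
    have "rho_star D P rho - e_star D P PH rho \<le> b d" if "d \<in> D" for d
    proof -
      have "rho_star D P rho \<le> a d" unfolding rs by (rule cINF_lower[OF bba that])
      then show ?thesis using G(1)[OF that] ge[OF that] by linarith
    qed
    then show ?thesis unfolding rhs by (intro cINF_greatest[OF D(3)]) auto
  qed
  interpret M: prob_space M by (rule M)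
  note [measurable] = rv
  define rh where "rh = rho_hat_star D PH rho"
  define es' where "es' = e_star D P PH rho"
  define r where "r = rho_star D P rho"
  have key: "measure M ((rho_hat_e -` X \<inter> space M) \<inter> (e_e -` Y \<inter> space M))
      \<ge> (1 - \<delta>0) * (1 - \<delta>1)"
    if X: "X \<in> sets borel" and Y: "Y \<in> sets borel"
      and hX: "measure M (rho_hat_e -` X \<inter> space M) \<ge> 1 - \<delta>0"
      and hY: "measure M (e_e -` Y \<inter> space M) \<ge> 1 - \<delta>1" for X Y
  proof -
    have "(\<lambda>x. (rho_hat_e x, e_e x)) -` (X \<times> Y) \<inter> space M
        = (rho_hat_e -` X \<inter> space M) \<inter> (e_e -` Y \<inter> space M)" by auto
    then have "measure M ((rho_hat_e -` X \<inter> space M) \<inter> (e_e -` Y \<inter> space M))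
        = measure M (rho_hat_e -` X \<inter> space M) * measure M (e_e -` Y \<inter> space M)"
      using M.indep_varD[OF indep X Y] by simp
    moreover have "(1 - \<delta>0) * (1 - \<delta>1) \<le> measure M (rho_hat_e -` X \<inter> space M) * measure M (e_e -` Y \<inter> space M)"
      by (rule mult_mono[OF hX hY]) (use \<delta>0 \<delta>1 in auto)
    ultimately show ?thesis by simp
  qed
  have s1: "rho_hat_e -` {..rh} \<inter> space M = {w \<in> space M. rh \<ge> rho_hat_e w}" by auto
  have s2: "e_e -` {es'..} \<inter> space M = {w \<in> space M. es' \<le> e_e w}" by auto
  have s3: "rho_hat_e -` {rh - \<epsilon>0..rh + \<epsilon>0} \<inter> space M = {w \<in> space M. \<bar>rh - rho_hat_e w\<bar> \<le> \<epsilon>0}"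
    by (auto simp: abs_le_iff)
  have A1: "(1 - \<delta>0) * (1 - \<delta>1) \<le> measure M ((rho_hat_e -` {..rh} \<inter> space M) \<inter> (e_e -` {es'..} \<inter> space M))"
    apply (rule key) apply simp apply simp apply (unfold s1 s2) apply (unfold rh_def es'_def)
    using lemma3_a lemma4_a by auto
  have A2: "(1 - \<delta>0) * (1 - \<delta>1) \<le> measure M ((rho_hat_e -` {rh - \<epsilon>0..rh + \<epsilon>0} \<inter> space M) \<inter> (e_e -` {es'..} \<inter> space M))"
    apply (rule key) apply simp apply simp apply (unfold s3 s2) apply (unfold rh_def es'_def)
    using lemma3_b lemma4_a by auto
  have T1: "measure M ((rho_hat_e -` {..rh} \<inter> space M) \<inter> (e_e -` {es'..} \<inter> space M))
      \<le> measure M {w \<in> space M. r \<ge> rho_hat_e w - e_e w}"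
    by (rule M.finite_measure_mono) (use ineq1 in \<open>auto simp: r_def rh_def es'_def\<close>)
  have T2: "measure M ((rho_hat_e -` {rh - \<epsilon>0..rh + \<epsilon>0} \<inter> space M) \<inter> (e_e -` {es'..} \<inter> space M))
      \<le> measure M {w \<in> space M. \<bar>r - (rho_hat_e w - e_e w)\<bar> \<le> 2 * e_e w + \<epsilon>0 + \<epsilon>1}"
  proof (rule M.finite_measure_mono)
    show "{w \<in> space M. \<bar>r - (rho_hat_e w - e_e w)\<bar> \<le> 2 * e_e w + \<epsilon>0 + \<epsilon>1} \<in> sets M" by measurable
    show "(rho_hat_e -` {rh - \<epsilon>0..rh + \<epsilon>0} \<inter> space M) \<inter> (e_e -` {es'..} \<inter> space M)
      \<subseteq> {w \<in> space M. \<bar>r - (rho_hat_e w - e_e w)\<bar> \<le> 2 * e_e w + \<epsilon>0 + \<epsilon>1}"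
      using ineq1 ineq2 e0 \<epsilon>1 unfolding r_def[symmetric] rh_def[symmetric] es'_def[symmetric]
      by (auto simp: abs_le_iff)
  qed
  show ?thesis using A1 A2 T1 T2 unfolding r_def by linarith
qed

end
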